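(* Let $(X,d)$ be a metric space and $f:\ell_\infty(X)\to X$. Then: (i) $f$ has a generalized contractive fixed point if and only if $\tilde f$ has a contractive fixed point with respect to the Tychonoff topology on $\ell_\infty(X)$; (ii) if $\mathbf{x}_*$ is a contractive fixed point of $\tilde f$ with respect to the Tychonoff topology, then $\mathbf{x}_*=(x_*,x_*,\dots)$, where $x_*$ is a generalized contractive fixed point of $f$.
   Context: $\mathbb{N}^*=\{0,1,2,\dots\}$; $\ell_\infty(X)$ is the set of all bounded sequences $(x_n)_{n\in\mathbb{N}^*}$ in $X$, and the Tychonoff topology on it is the subspace topology from $\prod_{n\in\mathbb{N}^*}X$. For $f:\ell_\infty(X)\to X$ define $\tilde f:\ell_\infty(X)\to\ell_\infty(X)$ by $\tilde f((x_n))=(f((x_n)),x_0,x_1,\dots)$. For $x\in\ell_\infty(X)$ put $\tilde{x}^0:=x$ and, for $k\ge1$, $x^k:=f(\tilde{x}^{k-1})$, $\tilde{x}^k:=\tilde f(\tilde{x}^{k-1})$; $(x^k)$ is the sequence of generalized iterates of $f$ at $x$. A point $x_*\in X$ is a generalized fixed point of $f$ if $f(x_*,x_*,\dots)=x_*$; it is a generalized contractive fixed point (GCFP) if moreover for every $x\in\ell_\infty(X)$ the sequence of generalized iterates of $f$ at $x$ converges to $x_*$. For a selfmap $g$ of a topological space $Y$, a fixed point $y_*$ of $g$ is a contractive fixed point (CFP) if $g^k(y)\to y_*$ for every $y\in Y$. *)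

theory Defs
  imports "HOL-Analysis.Analysis"
begin

definition linf :: "(nat \<Rightarrow> 'a::metric_space) set" where
  "linf = {x. bounded (range x)}"

definition tychonoff_linf :: "(nat \<Rightarrow> 'a::metric_space) topology" where
  "tychonoff_linf = subtopology (product_topology (\<lambda>_. euclidean) UNIV) linf"

text \<open>The map f-tilde: x \<mapsto> (f x, x0, x1, ...).\<close>
definition gext :: "((nat \<Rightarrow> 'a) \<Rightarrow> 'a) \<Rightarrow> (nat \<Rightarrow> 'a) \<Rightarrow> (nat \<Rightarrow> 'a)" where
  "gext f x = (\<lambda>n. case n of 0 \<Rightarrow> f x | Suc m \<Rightarrow> x m)"

text \<open>Generalized iterates: gen_iter f x k is the paper's x^(k+1) = f(x-tilde^k).\<close>
definition gen_iter :: "((nat \<Rightarrow> 'a) \<Rightarrow> 'a) \<Rightarrow> (nat \<Rightarrow> 'a) \<Rightarrow> nat \<Rightarrow> 'a" where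
  "gen_iter f x k = f ((gext f ^^ k) x)"

definition gen_fixed_point :: "((nat \<Rightarrow> 'a) \<Rightarrow> 'a) \<Rightarrow> 'a \<Rightarrow> bool" where
  "gen_fixed_point f xs \<longleftrightarrow> f (\<lambda>_. xs) = xs"

definition gcfp :: "((nat \<Rightarrow> 'a::metric_space) \<Rightarrow> 'a) \<Rightarrow> 'a \<Rightarrow> bool" where
  "gcfp f xs \<longleftrightarrow> gen_fixed_point f xs \<and>
     (\<forall>x\<in>linf. (gen_iter f x) \<longlonglongrightarrow> xs)"

definition cfp :: "'b topology \<Rightarrow> ('b \<Rightarrow> 'b) \<Rightarrow> 'b \<Rightarrow> bool" where
  "cfp T g ys \<longleftrightarrow> ys \<in> topspace T \<and> g ys = ys \<and>
     (\<forall>y\<in>topspace T. limitin T (\<lambda>k. (g ^^ k) y) ys sequentially)"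

end

theory Submission
  imports Defs
begin

lemma gext_0: "((gext f ^^ Suc k) x) 0 = gen_iter f x k"
  by (simp add: gext_def gen_iter_def)

lemma gext_Suc: "((gext f ^^ Suc k) x) (Suc n) = ((gext f ^^ k) x) n"
  by (simp add: gext_def)

lemma gext_shift: "((gext f ^^ (k + n)) x) n = ((gext f ^^ k) x) 0"
proof (induction n arbitrary: k)
  case 0 then show ?case by simp
next
  case (Suc n)
  have "((gext f ^^ (k + Suc n)) x) (Suc n) = ((gext f ^^ Suc (k + n)) x) (Suc n)" by simp
  also have "\<dots> = ((gext f ^^ (k + n)) x) n" by (rule gext_Suc)
  finally show ?case using Suc by simp
qed

lemma gext_linf: "x \<in> linf \<Longrightarrow> gext f x \<in> linf"
proof -
  assume "x \<in> linf"
  then have b: "bounded (range x)" by (simp add: linf_def)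
  have "range (gext f x) \<subseteq> insert (f x) (range x)"
    by (auto simp: gext_def split: nat.splits)
  then show ?thesis using b by (metis linf_def mem_Collect_eq bounded_insert bounded_subset)
qed

lemma gext_pow_linf: "x \<in> linf \<Longrightarrow> (gext f ^^ k) x \<in> linf"
  by (induction k) (auto simp: gext_linf)

lemma topspace_t: "topspace (tychonoff_linf :: (nat \<Rightarrow> 'a::metric_space) topology) = linf"
  by (simp add: tychonoff_linf_def)

lemma limitin_t: "limitin (tychonoff_linf :: (nat \<Rightarrow> 'a::metric_space) topology) g l F \<longleftrightarrow>
   l \<in> linf \<and> eventually (\<lambda>a. g a \<in> linf) F \<and> (\<forall>i. ((\<lambda>c. g c i) \<longlongrightarrow> l i) F)"
  by (simp add: tychonoff_linf_def limitin_subtopology limitin_componentwise limitin_canonical_iff)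

lemma part2:
  fixes f :: "(nat \<Rightarrow> 'a::metric_space) \<Rightarrow> 'a"
  assumes "cfp tychonoff_linf (gext f) ys"
  shows "\<exists>xs. ys = (\<lambda>_. xs) \<and> gcfp f xs"
proof -
  from assms have fx0: "gext f ys = ys" and conv: "\<forall>y\<in>linf. limitin tychonoff_linf (\<lambda>k. (gext f ^^ k) y) ys sequentially"
    by (auto simp: cfp_def topspace_t)
  have c: "ys n = ys 0" for n
  proof (induction n)
    case (Suc n)
    have "ys (Suc n) = gext f ys (Suc n)" using fx0 by simp
    also have "\<dots> = ys n" by (simp add: gext_def)
    finally show ?case using Suc by simp
  qed simp
  then have ysc: "ys = (\<lambda>_. ys 0)" by auto
  have "f ys = ys 0" using fun_cong[OF fx0, of 0] by (simp add: gext_def)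
  then have gf: "gen_fixed_point f (ys 0)" using ysc by (simp add: gen_fixed_point_def)
  have "gen_iter f y \<longlonglongrightarrow> ys 0" if y: "y \<in> linf" for y
  proof -
    from conv y have "(\<lambda>k. (gext f ^^ k) y 0) \<longlonglongrightarrow> ys 0" by (auto simp: limitin_t)
    then have "(\<lambda>k. (gext f ^^ Suc k) y 0) \<longlonglongrightarrow> ys 0" by (rule LIMSEQ_Suc)
    then show ?thesis by (simp only: gext_0)
  qed
  with gf ysc show ?thesis by (auto simp: gcfp_def)
qed

lemma part1:
  fixes f :: "(nat \<Rightarrow> 'a::metric_space) \<Rightarrow> 'a"
  assumes g: "gcfp f xs"
  shows "cfp tychonoff_linf (gext f) (\<lambda>_. xs)"
proof -
  from g have fx: "f (\<lambda>_. xs) = xs" and cv: "\<forall>x\<in>linf. gen_iter f x \<longlonglongrightarrow> xs"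
    by (auto simp: gcfp_def gen_fixed_point_def)
  have inl: "(\<lambda>_. xs) \<in> linf" by (simp add: linf_def)
  have fixp: "gext f (\<lambda>_. xs) = (\<lambda>_. xs)"
    by (rule ext) (simp add: gext_def fx split: nat.splits)
  have "limitin tychonoff_linf (\<lambda>k. (gext f ^^ k) y) (\<lambda>_. xs) sequentially" if y: "y \<in> linf" for y
  proof -
    have "(\<lambda>k. (gext f ^^ k) y i) \<longlonglongrightarrow> xs" for i
    proof -
      have "(\<lambda>k. (gext f ^^ (k + Suc i)) y i) = gen_iter f y"
      proof
        fix k
        have "(gext f ^^ (k + Suc i)) y i = (gext f ^^ (Suc k + i)) y i" by simp
        also have "\<dots> = gen_iter f y k" by (simp only: gext_shift gext_0)
        finally show "(gext f ^^ (k + Suc i)) y i = gen_iter f y k" .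
      qed
      then have "(\<lambda>k. (gext f ^^ (k + Suc i)) y i) \<longlonglongrightarrow> xs" using cv y by simp
      then show ?thesis by (rule LIMSEQ_offset)
    qed
    then show ?thesis using inl y by (simp add: limitin_t gext_pow_linf)
  qed
  then show ?thesis using inl fixp by (simp add: cfp_def topspace_t)
qed

theorem mainTheorem8:
  fixes f :: "(nat \<Rightarrow> 'a::metric_space) \<Rightarrow> 'a"
  shows "((\<exists>xs. gcfp f xs) \<longleftrightarrow> (\<exists>ys. cfp tychonoff_linf (gext f) ys))
    \<and> (\<forall>ys. cfp tychonoff_linf (gext f) ys \<longrightarrow> (\<exists>xs. ys = (\<lambda>_. xs) \<and> gcfp f xs))"
  using part1 part2 by blast

end
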